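(* Fix a constant integer $k\ge2$ and a constant $\varepsilon_0\in(0,\frac1{200\cdot2^k})$. For any sufficiently large integer $m\ge m_0(k,\varepsilon_0)$, let $\ell=\lfloor\frac1k\log\frac m{100\varepsilon_0}\rfloor$, let $\mathcal X=\{\Phi_i:0\le i<2^m\}$ be the set of hard CNF formulas with parameters $k,\ell,m$ described in the context, and let $n=mk\ell$. Let $K$ be uniformly random in $\{0,\dots,2^m-1\}$ and let $X_1,\dots,X_T$ be i.i.d. samples from $\mu_{\Phi_K}$. Any algorithm that, given $X_1,\dots,X_T$, outputs a formula $\Phi_{\tilde K}\in\mathcal X$ satisfying $d_{\mathrm{TV}}(\mu_{\Phi_K},\mu_{\Phi_{\tilde K}})\le\varepsilon_0$ with probability at least $\frac13$ requires at least $$T=\frac1{25\cdot2^k}\Big(\frac{n}{100\varepsilon_0\log(\frac n{100\varepsilon_0})}\Big)^{\frac{k-2}k}$$ samples.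
   Context: $\log$ denotes $\log_2$. Gadgets: on variables $U=\{v_{i,j}:i\in[\ell],j\in[k]\}$, for each $i\in\{1,\dots,\ell-1\}$, $j\in[k]$, let $c_{ij}$ be the clause on $\{v_{i,r}:r\ne j\}\cup\{v_{i+1,j}\}$ forbidding the all-True assignment if $i$ is odd and the all-False assignment if $i$ is even; let $\mathcal C$ be the set of these clauses and $c$ the clause on $\{v_{1,j}:j\in[k]\}$ forbidding all-True. The unrestricted depth-$\ell$ gadget is $(U,\mathcal C)$, the restricted one is $(U,\mathcal C\cup\{c\})$. Hard formulas: let $V$ have $mk\ell$ variables partitioned into $U_1,\dots,U_m$ each of size $k\ell$. For $0\le i<2^m$, write $i$ in binary with $m$ bits $i_1,\dots,i_m$; $\Phi_i=(V,\mathcal C_i)$ places on each $U_j$ the unrestricted depth-$\ell$ gadget if $i_j=0$ and the restricted depth-$\ell$ gadget if $i_j=1$. $\mu_{\Phi}$ is the uniform distribution over satisfying assignments of $\Phi$ and $d_{\mathrm{TV}}$ is total variation distance. *)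

theory Defs
  imports "HOL-Probability.Probability"
begin

text \<open>Variables v_{i,j} of block U_b are encoded as triples (b, a, r) with
  block b < m, level a < l (a = i - 1) and column r < k (r = j - 1).\<close>

type_synonym var = "nat \<times> nat \<times> nat"
type_synonym assignment = "var \<Rightarrow> bool"

definition vars :: "nat \<Rightarrow> nat \<Rightarrow> nat \<Rightarrow> var set" where
  "vars k l m = {0..<m} \<times> {0..<l} \<times> {0..<k}"

definition assignments :: "nat \<Rightarrow> nat \<Rightarrow> nat \<Rightarrow> assignment set" where
  "assignments k l m = {\<sigma>. \<forall>x. x \<notin> vars k l m \<longrightarrow> \<sigma> x = False}"

text \<open>Clause c_{ij} of the gadget on block b (1-indexed level i = a + 1, column j = c + 1):
  variables {v_{i,r} : r \<noteq> j} \<union> {v_{i+1,j}}; forbids all-True if i is odd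
  (i.e. a even) and all-False if i is even (a odd).\<close>
definition gadget_clause_sat :: "nat \<Rightarrow> nat \<Rightarrow> nat \<Rightarrow> nat \<Rightarrow> assignment \<Rightarrow> bool" where
  "gadget_clause_sat k b a c \<sigma> =
     (let forb = even a in
      \<not> ((\<forall>r<k. r \<noteq> c \<longrightarrow> \<sigma> (b, a, r) = forb) \<and> \<sigma> (b, Suc a, c) = forb))"

definition unrestricted_sat :: "nat \<Rightarrow> nat \<Rightarrow> nat \<Rightarrow> assignment \<Rightarrow> bool" where
  "unrestricted_sat k l b \<sigma> = (\<forall>a c. a + 1 < l \<longrightarrow> c < k \<longrightarrow> gadget_clause_sat k b a c \<sigma>)"

definition restr_clause_sat :: "nat \<Rightarrow> nat \<Rightarrow> assignment \<Rightarrow> bool" where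
  "restr_clause_sat k b \<sigma> = (\<not> (\<forall>r<k. \<sigma> (b, 0, r) = True))"

text \<open>Binary digit i_j (j = b + 1, 1-indexed, i_1 the most significant of m bits).\<close>
definition bit_of :: "nat \<Rightarrow> nat \<Rightarrow> nat \<Rightarrow> bool" where
  "bit_of m i b = odd (i div 2 ^ (m - 1 - b))"

definition sat_set :: "nat \<Rightarrow> nat \<Rightarrow> nat \<Rightarrow> nat \<Rightarrow> assignment set" where
  "sat_set k l m i = {\<sigma> \<in> assignments k l m.
      \<forall>b<m. unrestricted_sat k l b \<sigma> \<and> (bit_of m i b \<longrightarrow> restr_clause_sat k b \<sigma>)}"

definition mu :: "nat \<Rightarrow> nat \<Rightarrow> nat \<Rightarrow> nat \<Rightarrow> assignment pmf" where
  "mu k l m i = pmf_of_set (sat_set k l m i)"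

definition dTV :: "'a pmf \<Rightarrow> 'a pmf \<Rightarrow> real" where
  "dTV p q = (SUP A. \<bar>measure_pmf.prob p A - measure_pmf.prob q A\<bar>)"

definition success_prob ::
  "nat \<Rightarrow> nat \<Rightarrow> nat \<Rightarrow> real \<Rightarrow> nat \<Rightarrow> (assignment list \<Rightarrow> nat pmf) \<Rightarrow> real" where
  "success_prob k l m eps0 T A =
     measure_pmf.prob
       (do { K \<leftarrow> pmf_of_set {0..<2^m};
             X \<leftarrow> replicate_pmf T (mu k l m K);
             K' \<leftarrow> A X;
             return_pmf (K, K') })
       {(K, K'). K' < 2^m \<and> dTV (mu k l m K) (mu k l m K') \<le> eps0}"

end

theory Submission
  imports Defs
begin

definition ucl :: "nat \<Rightarrow> nat \<Rightarrow> (nat \<times> nat \<Rightarrow> bool) \<Rightarrow> bool" where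
  "ucl k l g = (\<forall>a c. a + 1 < l \<longrightarrow> c < k \<longrightarrow>
      \<not> ((\<forall>r<k. r \<noteq> c \<longrightarrow> g (a, r) = even a) \<and> g (Suc a, c) = even a))"

definition rcl :: "nat \<Rightarrow> (nat \<times> nat \<Rightarrow> bool) \<Rightarrow> bool" where
  "rcl k g = (\<not> (\<forall>r<k. g (0, r) = True))"

definition Sb :: "nat \<Rightarrow> nat \<Rightarrow> bool \<Rightarrow> (nat \<times> nat \<Rightarrow> bool) set" where
  "Sb k l \<beta> = {g. (\<forall>a r. \<not> (a < l \<and> r < k) \<longrightarrow> g (a, r) = False) \<and> ucl k l g \<and> (\<beta> \<longrightarrow> rcl k g)}"

definition sst :: "nat \<Rightarrow> nat \<Rightarrow> (nat \<times> nat \<Rightarrow> bool)" where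
  "sst k l = (\<lambda>(a, r). a < l \<and> r < k \<and> even a)"

lemma Sb_card_le: "finite (Sb k l \<beta>) \<and> card (Sb k l \<beta>) \<le> 2 ^ (l * k)"
proof -
  let ?G = "{0..<l} \<times> {0..<k}"
  let ?f = "\<lambda>g. {x \<in> ?G. g x}"
  have inj: "inj_on ?f (Sb k l \<beta>)"
  proof (rule inj_onI)
    fix g h assume g: "g \<in> Sb k l \<beta>" and h: "h \<in> Sb k l \<beta>" and e: "?f g = ?f h"
    show "g = h"
    proof
      fix x :: "nat \<times> nat"
      obtain a r where x: "x = (a, r)" by (cases x)
      show "g x = h x"
      proof (cases "a < l \<and> r < k")
        case True
        then have "x \<in> ?G" using x by auto
        then show ?thesis using e by blast
      next
        case False
        then show ?thesis using g h x by (auto simp: Sb_def)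
      qed
    qed
  qed
  have sub: "?f ` Sb k l \<beta> \<subseteq> Pow ?G" by auto
  have fin: "finite (Pow ?G)" by auto
  have "finite (Sb k l \<beta>)"
    using finite_imageD[OF finite_subset[OF sub fin] inj] .
  moreover have "card (Sb k l \<beta>) \<le> 2 ^ (l * k)"
  proof -
    have "card (Sb k l \<beta>) = card (?f ` Sb k l \<beta>)" using card_image[OF inj] by simp
    also have "\<dots> \<le> card (Pow ?G)" by (rule card_mono[OF fin sub])
    also have "\<dots> = 2 ^ (l * k)" by (simp add: card_Pow card_cartesian_product)
    finally show ?thesis .
  qed
  ultimately show ?thesis by blast
qed

lemma sst_in: "sst k l \<in> Sb k l False"
  unfolding Sb_def sst_def ucl_def by auto

lemma sst_notin: "l \<ge> 1 \<Longrightarrow> sst k l \<notin> Sb k l True"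
  unfolding Sb_def sst_def rcl_def by auto

lemma Sb_True_sub: "Sb k l True \<subseteq> Sb k l False"
  unfolding Sb_def by auto

lemma Sb_prop:
  assumes g: "g \<in> Sb k l False" and nr: "\<not> rcl k g"
  shows "g = sst k l"
proof -
  have lev: "\<forall>r<k. g (a, r) = even a" if "a < l" for a
    using that
  proof (induction a)
    case 0
    then show ?case using nr by (auto simp: rcl_def)
  next
    case (Suc a)
    show ?case
    proof (intro allI impI)
      fix c assume c: "c < k"
      have IH: "\<forall>r<k. g (a, r) = even a" using Suc by auto
      have "ucl k l g" using g by (auto simp: Sb_def)
      then have "\<not> ((\<forall>r<k. r \<noteq> c \<longrightarrow> g (a, r) = even a) \<and> g (Suc a, c) = even a)"
        using Suc.prems c unfolding ucl_def by auto
      then show "g (Suc a, c) = even (Suc a)" using IH by auto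
    qed
  qed
  show ?thesis
  proof
    fix x :: "nat \<times> nat"
    obtain a r where x: "x = (a, r)" by (cases x)
    show "g x = sst k l x"
      using lev[of a] g x by (cases "a < l \<and> r < k") (auto simp: Sb_def sst_def)
  qed
qed

lemma Sb_False_eq: "l \<ge> 1 \<Longrightarrow> Sb k l False = insert (sst k l) (Sb k l True)"
proof
  show "Sb k l False \<subseteq> insert (sst k l) (Sb k l True)"
  proof
    fix g assume g: "g \<in> Sb k l False"
    show "g \<in> insert (sst k l) (Sb k l True)"
    proof (cases "rcl k g")
      case True then show ?thesis using g by (auto simp: Sb_def)
    next
      case False then show ?thesis using Sb_prop[OF g] by auto
    qed
  qed
qed (use sst_in Sb_True_sub in auto)

lemma Sb_True_card_ge:
  assumes k: "k \<ge> 2"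
  shows "card (Sb k l True) \<ge> 2 ^ (l * (k - 2))"
proof -
  let ?H = "{0..<l} \<times> {2..<k}"
  let ?f = "\<lambda>Z (a, r). a < l \<and> r < k \<and> (if r < 2 then odd a else (a, r) \<in> Z)"
  have inj: "inj_on ?f (Pow ?H)"
  proof (rule inj_onI)
    fix Z Y assume Z: "Z \<in> Pow ?H" and Y: "Y \<in> Pow ?H" and e: "?f Z = ?f Y"
    show "Z = Y"
    proof (intro set_eqI iffI)
      fix x assume "x \<in> Z"
      moreover obtain a r where x: "x = (a, r)" by (cases x)
      ultimately have "a < l" "r < k" "\<not> r < 2" using Z by auto
      then have "?f Z (a, r) = ((a, r) \<in> Z)" "?f Y (a, r) = ((a, r) \<in> Y)" by auto
      then show "x \<in> Y" using e \<open>x \<in> Z\<close> x by metis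
    next
      fix x assume "x \<in> Y"
      moreover obtain a r where x: "x = (a, r)" by (cases x)
      ultimately have "a < l" "r < k" "\<not> r < 2" using Y by auto
      then have "?f Z (a, r) = ((a, r) \<in> Z)" "?f Y (a, r) = ((a, r) \<in> Y)" by auto
      then show "x \<in> Z" using e \<open>x \<in> Y\<close> x by metis
    qed
  qed
  have sub: "?f ` Pow ?H \<subseteq> Sb k l True"
  proof
    fix g assume "g \<in> ?f ` Pow ?H"
    then obtain Z where g: "g = ?f Z" by auto
    have "ucl k l g"
      unfolding ucl_def
    proof (intro allI impI notI)
      fix a c assume a: "a + 1 < l" and c: "c < k"
        and h: "(\<forall>r<k. r \<noteq> c \<longrightarrow> g (a, r) = even a) \<and> g (Suc a, c) = even a"
      obtain r :: nat where r: "r < 2" "r \<noteq> c"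
      proof (cases "c = 0")
        case True then show ?thesis using that[of 1] by auto
      next
        case False then show ?thesis using that[of 0] by auto
      qed
      then have "g (a, r) = even a" using h k by auto
      moreover have "g (a, r) = odd a" using r a k g by auto
      ultimately show False by simp
    qed
    moreover have "rcl k g" unfolding rcl_def using k g by (auto intro!: exI[of _ 0])
    ultimately show "g \<in> Sb k l True" using g by (auto simp: Sb_def)
  qed
  have "2 ^ (l * (k - 2)) = card (Pow ?H)" by (simp add: card_Pow card_cartesian_product)
  also have "\<dots> = card (?f ` Pow ?H)" using card_image[OF inj] by simp
  also have "\<dots> \<le> card (Sb k l True)" using card_mono[OF _ sub] Sb_card_le by blast
  finally show ?thesis .
qed


definition pp :: "nat \<Rightarrow> nat \<Rightarrow> real" where
  "pp k l = 1 / real (card (Sb k l False))"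

definition qq :: "nat \<Rightarrow> nat \<Rightarrow> (bool \<times> (nat \<times> nat \<Rightarrow> bool)) pmf" where
  "qq k l = pair_pmf (bernoulli_pmf (pp k l)) (pmf_of_set (Sb k l True))"

definition Fb :: "nat \<Rightarrow> nat \<Rightarrow> bool \<Rightarrow> bool \<times> (nat \<times> nat \<Rightarrow> bool) \<Rightarrow> (nat \<times> nat \<Rightarrow> bool)" where
  "Fb k l \<beta> hy = (if \<not> \<beta> \<and> fst hy then sst k l else snd hy)"

lemma Sb_basic:
  assumes "k \<ge> 2" "l \<ge> 1"
  shows "finite (Sb k l True)" "Sb k l True \<noteq> {}" "finite (Sb k l False)" "Sb k l False \<noteq> {}"
    "card (Sb k l False) = Suc (card (Sb k l True))"
    "0 < pp k l" "pp k l \<le> 1"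
proof -
  show f1: "finite (Sb k l True)" "finite (Sb k l False)" using Sb_card_le by blast+
  have "card (Sb k l True) \<ge> 2 ^ (l * (k - 2))" using Sb_True_card_ge assms by blast
  moreover have "(2::nat) ^ (l * (k - 2)) \<ge> 1" by simp
  ultimately have "card (Sb k l True) \<ge> 1" by linarith
  then show "Sb k l True \<noteq> {}" by auto
  show c: "card (Sb k l False) = Suc (card (Sb k l True))"
    using Sb_False_eq[OF assms(2)] sst_notin[OF assms(2)] f1 by simp
  then show "Sb k l False \<noteq> {}" by auto
  show "0 < pp k l" "pp k l \<le> 1" using c by (auto simp: pp_def)
qed

lemma map_Fb_True: "map_pmf (Fb k l True) (qq k l) = pmf_of_set (Sb k l True)"
proof -
  have "Fb k l True = snd" by (rule ext) (simp add: Fb_def)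
  then show ?thesis by (simp add: qq_def map_snd_pair_pmf)
qed

lemma map_Fb_False:
  assumes "k \<ge> 2" "l \<ge> 1"
  shows "map_pmf (Fb k l False) (qq k l) = pmf_of_set (Sb k l False)"
proof -
  note b = Sb_basic[OF assms]
  let ?p = "pp k l" and ?Y = "pmf_of_set (Sb k l True)"
  have "map_pmf (Fb k l False) (qq k l) =
      bind_pmf (bernoulli_pmf ?p) (\<lambda>h. if h then return_pmf (sst k l) else ?Y)"
  proof -
    have e: "?Y \<bind> (\<lambda>b. map_pmf (Fb k l False) (return_pmf (h, b))) =
        (if h then return_pmf (sst k l) else ?Y)" for h
      by (cases h) (simp_all add: map_bind_pmf Fb_def bind_return_pmf' map_pmf_def bind_assoc_pmf bind_return_pmf)
    show ?thesis unfolding qq_def pair_pmf_def map_bind_pmf e by (rule refl)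
  qed
  also have "\<dots> = pmf_of_set (Sb k l False)"
  proof (rule pmf_eqI)
    fix g
    let ?n = "card (Sb k l True)"
    have pv: "?p = 1 / real (Suc ?n)" using b by (simp add: pp_def)
    have n0: "?n > 0" using b by (simp add: card_gt_0_iff)
    have nz: "(1::real) + (2 * real ?n + real ?n * real ?n) \<noteq> 0"
      by (intro order.strict_implies_not_eq[symmetric] add_pos_nonneg) auto
    show "pmf (bind_pmf (bernoulli_pmf ?p) (\<lambda>h. if h then return_pmf (sst k l) else ?Y)) g =
        pmf (pmf_of_set (Sb k l False)) g"
      using b sst_notin[OF assms(2)] Sb_False_eq[OF assms(2)] n0 nz
      by (auto simp: pmf_bind pv indicator_def field_simps of_nat_Suc)
  qed
  finally show ?thesis .
qed


definition dflt0 :: "nat \<times> nat \<Rightarrow> bool" where "dflt0 = (\<lambda>_. False)"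

definition QQ :: "nat \<Rightarrow> nat \<Rightarrow> nat \<Rightarrow> (nat \<Rightarrow> bool \<times> (nat \<times> nat \<Rightarrow> bool)) pmf" where
  "QQ k l m = Pi_pmf {0..<m} (False, dflt0) (\<lambda>_. qq k l)"

definition sig :: "nat \<Rightarrow> nat \<Rightarrow> nat \<Rightarrow> nat set \<Rightarrow> (nat \<Rightarrow> bool \<times> (nat \<times> nat \<Rightarrow> bool)) \<Rightarrow> assignment" where
  "sig k l m S w = (\<lambda>(b, a, r). if b < m then Fb k l (b \<in> S) (w b) (a, r) else False)"

definition bset :: "nat \<Rightarrow> nat \<Rightarrow> nat set" where
  "bset m K = {b. b < m \<and> bit_of m K b}"

lemma unr_iff: "unrestricted_sat k l b \<sigma> = ucl k l (\<lambda>x. \<sigma> (b, x))"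
  by (simp add: unrestricted_sat_def ucl_def gadget_clause_sat_def Let_def)

lemma restr_iff: "restr_clause_sat k b \<sigma> = rcl k (\<lambda>x. \<sigma> (b, x))"
  by (simp add: restr_clause_sat_def rcl_def)

lemma Pi_dec:
  assumes "k \<ge> 2" "l \<ge> 1"
  shows "Pi_pmf {0..<m} dflt0 (\<lambda>b. pmf_of_set (Sb k l (b \<in> S))) =
    map_pmf (\<lambda>w b. if b \<in> {0..<m} then Fb k l (b \<in> S) (w b) else dflt0) (QQ k l m)"
proof -
  have "Pi_pmf {0..<m} dflt0 (\<lambda>b. pmf_of_set (Sb k l (b \<in> S))) =
      Pi_pmf {0..<m} dflt0 (\<lambda>b. bind_pmf (qq k l) (\<lambda>x. return_pmf (Fb k l (b \<in> S) x)))"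
  proof (intro Pi_pmf_cong refl)
    fix b
    show "pmf_of_set (Sb k l (b \<in> S)) = bind_pmf (qq k l) (\<lambda>x. return_pmf (Fb k l (b \<in> S) x))"
      using map_Fb_True[of k l] map_Fb_False[OF assms]
      by (cases "b \<in> S") (simp_all add: map_pmf_def)
  qed
  also have "\<dots> = bind_pmf (Pi_pmf {0..<m} (False, dflt0) (\<lambda>_. qq k l))
      (\<lambda>f. Pi_pmf {0..<m} dflt0 (\<lambda>b. return_pmf (Fb k l (b \<in> S) (f b))))"
    by (rule Pi_pmf_bind) simp
  also have "\<dots> = map_pmf (\<lambda>w b. if b \<in> {0..<m} then Fb k l (b \<in> S) (w b) else dflt0) (QQ k l m)"
    by (simp add: map_pmf_def QQ_def)
  finally show ?thesis .
qed

lemma sat_set_eq: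
  "sat_set k l m K = (\<lambda>f x. f (fst x) (snd x)) `
     PiE_dflt {0..<m} dflt0 (\<lambda>b. Sb k l (b \<in> bset m K))"
proof (intro equalityI subsetI)
  fix \<sigma> assume s: "\<sigma> \<in> sat_set k l m K"
  define f where "f = (\<lambda>b. if b < m then (\<lambda>x. \<sigma> (b, x)) else dflt0)"
  have "\<sigma> = (\<lambda>x. f (fst x) (snd x))"
  proof
    fix x :: var
    obtain b a r where x: "x = (b, a, r)" by (cases x) auto
    show "\<sigma> x = f (fst x) (snd x)"
      using s x by (auto simp: f_def dflt0_def sat_set_def assignments_def vars_def)
  qed
  moreover have "f \<in> PiE_dflt {0..<m} dflt0 (\<lambda>b. Sb k l (b \<in> bset m K))"
    unfolding PiE_dflt_def
  proof (intro CollectI allI conjI impI)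
    fix b assume b: "b \<in> {0..<m}"
    have "\<sigma> (b, a, r) = False" if "\<not> (a < l \<and> r < k)" for a r
      using s that by (auto simp: sat_set_def assignments_def vars_def)
    moreover have "ucl k l (\<lambda>x. \<sigma> (b, x))" using s b by (auto simp: sat_set_def unr_iff)
    moreover have "rcl k (\<lambda>x. \<sigma> (b, x))" if "b \<in> bset m K"
      using s b that by (auto simp: sat_set_def restr_iff bset_def)
    ultimately show "f b \<in> Sb k l (b \<in> bset m K)" using b by (auto simp: Sb_def f_def)
  next
    fix b assume "b \<notin> {0..<m}" then show "f b = dflt0" by (simp add: f_def)
  qed
  ultimately show "\<sigma> \<in> (\<lambda>f x. f (fst x) (snd x)) ` PiE_dflt {0..<m} dflt0 (\<lambda>b. Sb k l (b \<in> bset m K))"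
    by blast
next
  fix \<sigma> assume "\<sigma> \<in> (\<lambda>f x. f (fst x) (snd x)) ` PiE_dflt {0..<m} dflt0 (\<lambda>b. Sb k l (b \<in> bset m K))"
  then obtain f where f: "f \<in> PiE_dflt {0..<m} dflt0 (\<lambda>b. Sb k l (b \<in> bset m K))"
    and s: "\<sigma> = (\<lambda>x. f (fst x) (snd x))" by blast
  have fb: "f b \<in> Sb k l (b \<in> bset m K)" if "b < m" for b using f that by (auto simp: PiE_dflt_def)
  have fo: "f b = dflt0" if "\<not> b < m" for b using f that by (auto simp: PiE_dflt_def)
  have blk: "(\<lambda>x. \<sigma> (b, x)) = f b" for b using s by auto
  have "\<sigma> \<in> assignments k l m"
    unfolding assignments_def
  proof (intro CollectI allI impI)
    fix x :: var assume x: "x \<notin> vars k l m"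
    obtain b a r where xx: "x = (b, a, r)" by (cases x) auto
    show "\<sigma> x = False"
    proof (cases "b < m")
      case True
      then show ?thesis using fb[OF True] x xx s by (auto simp: Sb_def vars_def)
    next
      case False
      then show ?thesis using fo[OF False] xx s by (auto simp: dflt0_def)
    qed
  qed
  moreover have "unrestricted_sat k l b \<sigma> \<and> (bit_of m K b \<longrightarrow> restr_clause_sat k b \<sigma>)" if b: "b < m" for b
    using fb[OF b] b unfolding unr_iff restr_iff blk by (auto simp: Sb_def bset_def)
  ultimately show "\<sigma> \<in> sat_set k l m K" by (auto simp: sat_set_def)
qed

lemma mu_rep:
  assumes "k \<ge> 2" "l \<ge> 1"
  shows "mu k l m K = map_pmf (sig k l m (bset m K)) (QQ k l m)"
proof -
  let ?P = "PiE_dflt {0..<m} dflt0 (\<lambda>b. Sb k l (b \<in> bset m K))"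
  let ?g = "\<lambda>f x. f (fst x) (snd x)"
  note b = Sb_basic[OF assms]
  have fin: "finite (Sb k l \<beta>)" "Sb k l \<beta> \<noteq> {}" for \<beta> using b by (cases \<beta>; simp)+
  have inj: "inj_on ?g ?P"
  proof (rule inj_onI)
    fix f h assume "?g f = ?g h"
    then have "f b x = h b x" for b x by (metis fst_conv snd_conv)
    then show "f = h" by (intro ext)
  qed
  have P: "finite ?P" "?P \<noteq> {}" using fin by (auto simp: PiE_dflt_empty_iff)
  have "mu k l m K = pmf_of_set (?g ` ?P)" by (simp add: mu_def sat_set_eq)
  also have "\<dots> = map_pmf ?g (pmf_of_set ?P)" by (rule map_pmf_of_set_inj[symmetric, OF inj P(2,1)])
  also have "pmf_of_set ?P = Pi_pmf {0..<m} dflt0 (\<lambda>b. pmf_of_set (Sb k l (b \<in> bset m K)))"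
    using fin by (intro Pi_pmf_of_set[symmetric]) auto
  also have "\<dots> = map_pmf (\<lambda>w b. if b \<in> {0..<m} then Fb k l (b \<in> bset m K) (w b) else dflt0) (QQ k l m)"
    by (rule Pi_dec[OF assms])
  also have "map_pmf ?g \<dots> = map_pmf (sig k l m (bset m K)) (QQ k l m)"
    unfolding pmf.map_comp
  proof (intro map_pmf_cong refl)
    fix w
    show "(?g \<circ> (\<lambda>w b. if b \<in> {0..<m} then Fb k l (b \<in> bset m K) (w b) else dflt0)) w =
        sig k l m (bset m K) w"
      by (auto simp: sig_def dflt0_def fun_eq_iff)
  qed
  finally show ?thesis .
qed


lemma prob_nofst:
  assumes "k \<ge> 2" "l \<ge> 1" "D \<subseteq> {0..<m}"
  shows "measure_pmf.prob (QQ k l m) {w. \<forall>b\<in>D. \<not> fst (w b)} = (1 - pp k l) ^ card D"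
proof -
  note b = Sb_basic[OF assms(1,2)]
  have e1: "measure_pmf.prob (qq k l) {x. \<not> fst x} = 1 - pp k l"
  proof -
    have "measure_pmf.prob (qq k l) {x. \<not> fst x} = measure_pmf.prob (map_pmf fst (qq k l)) {False}"
      by (simp add: vimage_def)
    also have "\<dots> = 1 - pp k l" using b
      by (simp add: qq_def map_fst_pair_pmf measure_pmf_single)
    finally show ?thesis .
  qed
  have "{w. \<forall>b\<in>D. \<not> fst (w b)} = Pi {0..<m} (\<lambda>b. if b \<in> D then {x. \<not> fst x} else UNIV)"
    using assms(3) by (auto simp: Pi_def)
  then have "measure_pmf.prob (QQ k l m) {w. \<forall>b\<in>D. \<not> fst (w b)} =
      measure_pmf.prob (QQ k l m) (Pi {0..<m} (\<lambda>b. if b \<in> D then {x. \<not> fst x} else UNIV))"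
    by (rule arg_cong)
  also have "\<dots> = (\<Prod>b\<in>{0..<m}. measure_pmf.prob (qq k l) (if b \<in> D then {x. \<not> fst x} else UNIV))"
    unfolding QQ_def by (rule measure_Pi_pmf_Pi) simp
  also have "\<dots> = (\<Prod>b\<in>{0..<m}. if b \<in> D then 1 - pp k l else 1)"
    by (intro prod.cong refl) (simp add: e1)
  also have "\<dots> = (1 - pp k l) ^ card D"
    using assms(3) by (simp add: prod.If_cases Int_absorb2 Int_commute)
  finally show ?thesis .
qed

lemma sat_fin:
  assumes "k \<ge> 2" "l \<ge> 1"
  shows "finite (sat_set k l m K)" "sat_set k l m K \<noteq> {}"
proof -
  note b = Sb_basic[OF assms]
  have fin: "finite (Sb k l \<beta>)" "Sb k l \<beta> \<noteq> {}" for \<beta> using b by (cases \<beta>; simp)+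
  let ?P = "PiE_dflt {0..<m} dflt0 (\<lambda>b. Sb k l (b \<in> bset m K))"
  have P: "finite ?P" "?P \<noteq> {}" using fin by (auto simp: PiE_dflt_empty_iff)
  then show "finite (sat_set k l m K)" "sat_set k l m K \<noteq> {}" by (simp_all add: sat_set_eq)
qed

lemma sig_block: "b < m \<Longrightarrow> (\<lambda>x. sig k l m S w (b, x)) = Fb k l (b \<in> S) (w b)"
  by (auto simp: sig_def fun_eq_iff)

lemma dTV_lb:
  assumes "k \<ge> 2" "l \<ge> 1"
  shows "dTV (mu k l m K) (mu k l m K') \<ge> 1 - (1 - pp k l) ^ card {b. b < m \<and> b \<notin> bset m K \<and> b \<in> bset m K'}"
proof -
  define D where "D = {b. b < m \<and> b \<notin> bset m K \<and> b \<in> bset m K'}"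
  define E where "E = {\<sigma> :: assignment. \<exists>b\<in>D. (\<lambda>x. \<sigma> (b, x)) = sst k l}"
  have z: "measure_pmf.prob (mu k l m K') E = 0"
  proof -
    have "sat_set k l m K' \<inter> E = {}"
    proof (rule ccontr)
      assume "sat_set k l m K' \<inter> E \<noteq> {}"
      then obtain \<sigma> b where s: "\<sigma> \<in> sat_set k l m K'" and bD: "b \<in> D" and e: "(\<lambda>x. \<sigma> (b, x)) = sst k l"
        by (auto simp: E_def)
      then have "restr_clause_sat k b \<sigma>" by (auto simp: sat_set_def D_def bset_def)
      then have "rcl k (sst k l)" using e by (simp add: restr_iff)
      then show False using assms(2) by (auto simp: rcl_def sst_def)
    qed
    then show ?thesis using sat_fin[OF assms(1,2)] by (simp add: mu_def measure_pmf_of_set)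
  qed
  have "measure_pmf.prob (mu k l m K) (- E) \<le> (1 - pp k l) ^ card D"
  proof -
    have "measure_pmf.prob (mu k l m K) (- E) = measure_pmf.prob (QQ k l m) (sig k l m (bset m K) -` (- E))"
      by (simp add: mu_rep[OF assms(1,2)])
    also have "\<dots> \<le> measure_pmf.prob (QQ k l m) {w. \<forall>b\<in>D. \<not> fst (w b)}"
    proof (rule measure_pmf.finite_measure_mono)
      show "sig k l m (bset m K) -` (- E) \<subseteq> {w. \<forall>b\<in>D. \<not> fst (w b)}"
      proof
        fix w assume "w \<in> sig k l m (bset m K) -` (- E)"
        then have nE: "sig k l m (bset m K) w \<notin> E" by simp
        show "w \<in> {w. \<forall>b\<in>D. \<not> fst (w b)}"
        proof (intro CollectI ballI notI)
        fix b assume bD: "b \<in> D" and f: "fst (w b)"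
        have "b < m" "b \<notin> bset m K" using bD by (auto simp: D_def)
        then have "(\<lambda>x. sig k l m (bset m K) w (b, x)) = sst k l"
          using f by (simp add: sig_block Fb_def)
        then show False using nE bD by (auto simp: E_def)
      qed
      qed
    qed simp
    also have "\<dots> = (1 - pp k l) ^ card D"
      by (rule prob_nofst[OF assms(1,2)]) (auto simp: D_def)
    finally show ?thesis .
  qed
  then have "measure_pmf.prob (mu k l m K) E \<ge> 1 - (1 - pp k l) ^ card D"
    using measure_pmf.prob_compl[of E "mu k l m K"] by (simp add: Compl_eq_Diff_UNIV)
  then have "1 - (1 - pp k l) ^ card D \<le> \<bar>measure_pmf.prob (mu k l m K) E - measure_pmf.prob (mu k l m K') E\<bar>"
    using z by simp
  also have "\<dots> \<le> dTV (mu k l m K) (mu k l m K')"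
    unfolding dTV_def
  proof (rule cSUP_upper)
    show "bdd_above (range (\<lambda>A. \<bar>measure_pmf.prob (mu k l m K) A - measure_pmf.prob (mu k l m K') A\<bar>))"
    proof (rule bdd_aboveI2)
      fix A
      show "\<bar>measure_pmf.prob (mu k l m K) A - measure_pmf.prob (mu k l m K') A\<bar> \<le> 1"
        using measure_pmf.prob_le_1[of "mu k l m K" A] measure_pmf.prob_le_1[of "mu k l m K'" A]
          measure_nonneg[of "mu k l m K" A] measure_nonneg[of "mu k l m K'" A] by linarith
    qed
  qed simp
  finally show ?thesis unfolding D_def .
qed

lemma pow_le_inv:
  fixes p :: real
  assumes "0 \<le> p" "p \<le> 1"
  shows "(1 - p) ^ d \<le> 1 / (1 + p * d)"
proof -
  have "1 + real d * p \<le> (1 + p) ^ d" by (rule Bernoulli_inequality) (use assms in simp)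
  moreover have "(1 - p) ^ d * (1 + p) ^ d \<le> 1"
  proof -
    have "(1 - p) ^ d * (1 + p) ^ d = (1 - p * p) ^ d" by (simp add: power_mult_distrib[symmetric] algebra_simps)
    also have "\<dots> \<le> 1" using assms by (intro power_le_one) (auto simp: mult_le_one)
    finally show ?thesis .
  qed
  moreover have "0 \<le> (1 - p) ^ d" using assms by simp
  ultimately have "(1 - p) ^ d * (1 + p * d) \<le> 1"
    by (smt (verit, best) mult.commute mult_left_mono)
  moreover have "0 < 1 + p * d" using assms by (simp add: add_pos_nonneg)
  ultimately show ?thesis by (simp add: field_simps)
qed

lemma dTV_sym: "dTV p q = dTV q p"
  unfolding dTV_def by (simp add: abs_minus_commute)

lemma good_ham:
  assumes "k \<ge> 2" "l \<ge> 1" and eps: "0 < eps0" "eps0 < 1 / 2" and m: "m > 0"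
    and p: "pp k l \<ge> 100 * eps0 / m"
    and g: "dTV (mu k l m K) (mu k l m K') \<le> eps0"
  shows "real (card ((bset m K - bset m K') \<union> (bset m K' - bset m K))) < m / 25"
proof -
  note b = Sb_basic[OF assms(1,2)]
  have one: "real (card {b. b < m \<and> b \<notin> bset m K1 \<and> b \<in> bset m K2}) < m / 50"
    if g1: "dTV (mu k l m K1) (mu k l m K2) \<le> eps0" for K1 K2
  proof (rule ccontr)
    let ?d = "card {b. b < m \<and> b \<notin> bset m K1 \<and> b \<in> bset m K2}"
    assume "\<not> real ?d < m / 50"
    then have d: "real ?d \<ge> m / 50" by simp
    have "pp k l * ?d \<ge> (100 * eps0 / m) * (m / 50)"
      using p d b by (intro mult_mono) auto
    also have "(100 * eps0 / m) * (m / 50) = 2 * eps0" using m by (simp add: field_simps)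
    finally have pd: "pp k l * ?d \<ge> 2 * eps0" .
    have "(1 - pp k l) ^ ?d \<le> 1 / (1 + pp k l * ?d)" using b by (intro pow_le_inv) auto
    also have "\<dots> \<le> 1 / (1 + 2 * eps0)" using pd eps by (intro divide_left_mono) auto
    finally have "1 - 1 / (1 + 2 * eps0) \<le> dTV (mu k l m K1) (mu k l m K2)"
      using dTV_lb[OF assms(1,2), of m K1 K2] by linarith
    moreover have "1 - 1 / (1 + 2 * eps0) > eps0"
      using eps by (simp add: field_simps)
    ultimately show False using g1 by linarith
  qed
  have "(bset m K - bset m K') \<union> (bset m K' - bset m K) =
      {b. b < m \<and> b \<notin> bset m K' \<and> b \<in> bset m K} \<union> {b. b < m \<and> b \<notin> bset m K \<and> b \<in> bset m K'}"
    by (auto simp: bset_def)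
  moreover have "card (\<dots>) = card {b. b < m \<and> b \<notin> bset m K' \<and> b \<in> bset m K} + card {b. b < m \<and> b \<notin> bset m K \<and> b \<in> bset m K'}"
    by (intro card_Un_disjoint) auto
  ultimately show ?thesis
    using one[OF g] one[of K' K] g dTV_sym[of "mu k l m K" "mu k l m K'"] by simp
qed


lemma replicate_pmf_map: "replicate_pmf T (map_pmf f M) = map_pmf (map f) (replicate_pmf T M)"
  by (induction T) (simp_all add: map_pmf_def bind_assoc_pmf bind_return_pmf)

lemma bits_inj:
  fixes K K' :: nat
  assumes "K < 2 ^ m" "K' < 2 ^ m" "\<forall>j<m. odd (K div 2 ^ j) = odd (K' div 2 ^ j)"
  shows "K = K'"
  using assms
proof (induction m arbitrary: K K')
  case 0 then show ?case by simp
next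
  case (Suc m)
  have "K div 2 = K' div 2"
  proof (rule Suc.IH)
    show "K div 2 < 2 ^ m" "K' div 2 < 2 ^ m" using Suc.prems by auto
    show "\<forall>j<m. odd (K div 2 div 2 ^ j) = odd (K' div 2 div 2 ^ j)"
    proof (intro allI impI)
      fix j assume "j < m"
      then have "odd (K div 2 ^ Suc j) = odd (K' div 2 ^ Suc j)" using Suc.prems by auto
      then show "odd (K div 2 div 2 ^ j) = odd (K' div 2 div 2 ^ j)"
        by (simp add: div_mult2_eq)
    qed
  qed
  moreover have "K mod 2 = K' mod 2"
  proof -
    have "odd K = odd K'" using Suc.prems(3)[rule_format, of 0] by simp
    then show ?thesis by (cases "even K") (auto simp: even_iff_mod_2_eq_zero odd_iff_mod_2_eq_one)
  qed
  ultimately show ?case by (metis div_mult_mod_eq)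
qed

lemma bset_bij: "bij_betw (bset m) {0..<2 ^ m} (Pow {0..<m})"
proof -
  have inj: "inj_on (bset m) {0..<2 ^ m}"
  proof (rule inj_onI)
    fix K K' assume K: "K \<in> {0..<2 ^ m}" and K': "K' \<in> {0..<2 ^ m}" and e: "bset m K = bset m K'"
    show "K = K'"
    proof (rule bits_inj[of K m K'])
      show "K < 2 ^ m" "K' < 2 ^ m" using K K' by auto
      show "\<forall>j<m. odd (K div 2 ^ j) = odd (K' div 2 ^ j)"
      proof (intro allI impI)
        fix j assume j: "j < m"
        then have "m - 1 - (m - 1 - j) = j" "m - 1 - j < m" by auto
        moreover have "(m - 1 - j \<in> bset m K) = (m - 1 - j \<in> bset m K')" using e by simp
        ultimately show "odd (K div 2 ^ j) = odd (K' div 2 ^ j)"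
          by (simp add: bset_def bit_of_def)
      qed
    qed
  qed
  have sub: "bset m ` {0..<2 ^ m} \<subseteq> Pow {0..<m}" by (auto simp: bset_def)
  have "card (bset m ` {0..<2 ^ m}) = card (Pow {0..<m})"
    using card_image[OF inj] by (simp add: card_Pow)
  then have "bset m ` {0..<2 ^ m} = Pow {0..<m}"
    by (intro card_subset_eq sub) auto
  then show ?thesis using inj by (simp add: bij_betw_def)
qed

lemma prob_rep_exists:
  "measure_pmf.prob (replicate_pmf T M) {W. \<exists>w\<in>set W. P w} \<le> T * measure_pmf.prob M {w. P w}"
proof (induction T)
  case 0 then show ?case by simp
next
  case (Suc T)
  have "replicate_pmf (Suc T) M = map_pmf (\<lambda>(x, xs). x # xs) (pair_pmf M (replicate_pmf T M))"
    by (simp add: pair_pmf_def map_pmf_def bind_assoc_pmf bind_return_pmf)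
  then have "measure_pmf.prob (replicate_pmf (Suc T) M) {W. \<exists>w\<in>set W. P w} =
      measure_pmf.prob (pair_pmf M (replicate_pmf T M)) ({z. P (fst z)} \<union> {z. \<exists>w\<in>set (snd z). P w})"
    by (auto intro!: arg_cong[where f="measure_pmf.prob _"])
  also have "\<dots> \<le> measure_pmf.prob (pair_pmf M (replicate_pmf T M)) {z. P (fst z)} +
      measure_pmf.prob (pair_pmf M (replicate_pmf T M)) {z. \<exists>w\<in>set (snd z). P w}"
    by (rule measure_Un_le) auto
  also have "measure_pmf.prob (pair_pmf M (replicate_pmf T M)) {z. P (fst z)} = measure_pmf.prob M {w. P w}"
  proof -
    have "measure_pmf.prob (pair_pmf M (replicate_pmf T M)) {z. P (fst z)} =
        measure_pmf.prob (map_pmf fst (pair_pmf M (replicate_pmf T M))) {w. P w}" by (simp add: vimage_def)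
    then show ?thesis by (simp add: map_fst_pair_pmf)
  qed
  also have "measure_pmf.prob (pair_pmf M (replicate_pmf T M)) {z. \<exists>w\<in>set (snd z). P w} =
      measure_pmf.prob (replicate_pmf T M) {W. \<exists>w\<in>set W. P w}"
  proof -
    have "measure_pmf.prob (pair_pmf M (replicate_pmf T M)) {z. \<exists>w\<in>set (snd z). P w} =
        measure_pmf.prob (map_pmf snd (pair_pmf M (replicate_pmf T M))) {W. \<exists>w\<in>set W. P w}" by (simp add: vimage_def)
    then show ?thesis by (simp add: map_snd_pair_pmf)
  qed
  finally show ?case using Suc.IH by (simp add: algebra_simps)
qed

lemma prob_fst_QQ:
  assumes "k \<ge> 2" "l \<ge> 1" "b < m"
  shows "measure_pmf.prob (QQ k l m) {w. fst (w b)} = pp k l"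
proof -
  note bb = Sb_basic[OF assms(1,2)]
  have "measure_pmf.prob (QQ k l m) {w. fst (w b)} = measure_pmf.prob (map_pmf fst (map_pmf (\<lambda>w. w b) (QQ k l m))) {True}"
    by (simp add: vimage_def)
  also have "map_pmf (\<lambda>w. w b) (QQ k l m) = qq k l"
    unfolding QQ_def using assms(3) by (subst Pi_pmf_component) auto
  also have "measure_pmf.prob (map_pmf fst (qq k l)) {True} = pp k l"
    using bb by (simp add: qq_def map_fst_pair_pmf measure_pmf_single)
  finally show ?thesis .
qed


lemma sum_pow_card:
  fixes x :: real
  assumes "finite C"
  shows "(\<Sum>Z\<in>Pow C. x ^ card Z) = (1 + x) ^ card C"
  using assms
proof (induction C rule: finite_induct)
  case empty then show ?case by simp
next
  case (insert a C)
  have disj: "Pow C \<inter> insert a ` Pow C = {}" using insert.hyps by auto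
  have inj: "inj_on (insert a) (Pow C)"
    using insert.hyps by (intro inj_onI) (auto simp: insert_eq_iff)
  have fin: "finite (Pow C)" "finite (insert a ` Pow C)" using insert.hyps by auto
  have "(\<Sum>Z\<in>Pow (insert a C). x ^ card Z) = (\<Sum>Z\<in>Pow C. x ^ card Z) + (\<Sum>Z\<in>insert a ` Pow C. x ^ card Z)"
    unfolding Pow_insert by (rule sum.union_disjoint[OF fin disj])
  also have "(\<Sum>Z\<in>insert a ` Pow C. x ^ card Z) = (\<Sum>Z\<in>Pow C. x ^ card (insert a Z))"
    by (rule sum.reindex[OF inj, unfolded comp_def])
  also have "\<dots> = (\<Sum>Z\<in>Pow C. x * x ^ card Z)"
  proof (intro sum.cong refl)
    fix Z assume "Z \<in> Pow C"
    then have "finite Z" "a \<notin> Z" using insert.hyps finite_subset by auto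
    then show "x ^ card (insert a Z) = x * x ^ card Z" by simp
  qed
  also have "\<dots> = x * (1 + x) ^ card C" by (simp only: sum_distrib_left[symmetric] insert.IH)
  finally show ?case using insert.hyps insert.IH by (simp add: algebra_simps)
qed

lemma count_small:
  assumes "finite C"
  shows "real (card {Z\<in>Pow C. card Z \<le> d}) \<le> 2 ^ d * (3 / 2) ^ card C"
proof -
  have fin: "finite (Pow C)" using assms by simp
  have "real (card {Z\<in>Pow C. card Z \<le> d}) = (\<Sum>Z\<in>Pow C. if card Z \<le> d then 1 else 0)"
    using fin by (simp add: sum.If_cases Int_def)
  also have "\<dots> \<le> (\<Sum>Z\<in>Pow C. 2 ^ d * (1 / 2) ^ card Z)"
  proof (intro sum_mono)
    fix Z assume "Z \<in> Pow C"
    show "(if card Z \<le> d then 1 else 0) \<le> 2 ^ d * (1 / 2 :: real) ^ card Z"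
    proof (cases "card Z \<le> d")
      case True
      have "(2::real) ^ card Z \<le> 2 ^ d" using True by (intro power_increasing) auto
      then show ?thesis using True by (simp add: power_one_over field_simps)
    qed simp
  qed
  also have "\<dots> = 2 ^ d * (3 / 2) ^ card C"
    using sum_pow_card[OF assms, of "1/2"] by (simp add: sum_distrib_left[symmetric])
  finally show ?thesis .
qed

lemma count_ham:
  assumes "finite C" "S1 \<inter> C = {}" "finite S1" "finite Y"
  shows "card {S2\<in>Pow C. card (((S1 \<union> S2) - Y) \<union> (Y - (S1 \<union> S2))) \<le> d} \<le> card {Z\<in>Pow C. card Z \<le> d}"
proof -
  let ?f = "\<lambda>S2. (S2 - Y) \<union> ((Y \<inter> C) - S2)"
  let ?A = "{S2\<in>Pow C. card (((S1 \<union> S2) - Y) \<union> (Y - (S1 \<union> S2))) \<le> d}"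
  have inj: "inj_on ?f ?A"
  proof (rule inj_onI)
    fix A B assume A: "A \<in> ?A" and B: "B \<in> ?A" and e: "?f A = ?f B"
    show "A = B"
    proof (intro set_eqI)
      fix x
      have "x \<in> ?f A \<longleftrightarrow> x \<in> ?f B" using e by simp
      then show "x \<in> A \<longleftrightarrow> x \<in> B"
        using A B by (cases "x \<in> Y"; cases "x \<in> C") auto
    qed
  qed
  have sub: "?f ` ?A \<subseteq> {Z\<in>Pow C. card Z \<le> d}"
  proof
    fix Z assume "Z \<in> ?f ` ?A"
    then obtain S2 where S2: "S2 \<subseteq> C" "card (((S1 \<union> S2) - Y) \<union> (Y - (S1 \<union> S2))) \<le> d" and Z: "Z = ?f S2"
      by auto
    have "Z \<subseteq> ((S1 \<union> S2) - Y) \<union> (Y - (S1 \<union> S2))" using Z S2 assms(2) by auto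
    moreover have "finite (((S1 \<union> S2) - Y) \<union> (Y - (S1 \<union> S2)))"
      using assms S2 finite_subset by auto
    ultimately have "card Z \<le> d" using S2 card_mono by (meson order_trans)
    then show "Z \<in> {Z\<in>Pow C. card Z \<le> d}" using Z S2 by auto
  qed
  show ?thesis by (rule card_inj_on_le[OF inj sub]) (use assms in auto)
qed


lemma measure_sum_le:
  fixes M :: "'a pmf"
  assumes "finite P" "\<And>x. real (card {i\<in>P. x \<in> E i}) \<le> N"
  shows "(\<Sum>i\<in>P. measure_pmf.prob M (E i)) \<le> N"
proof -
  have "(\<Sum>i\<in>P. measure_pmf.prob M (E i)) = (\<Sum>i\<in>P. \<integral>x. indicator (E i) x \<partial>M)"
    by simp
  also have "\<dots> = (\<integral>x. (\<Sum>i\<in>P. indicator (E i) x) \<partial>M)"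
  proof -
    have "(\<integral>x. (\<Sum>i\<in>P. indicator (E i) x :: real) \<partial>M) = (\<Sum>i\<in>P. \<integral>x. indicator (E i) x \<partial>M)"
      by (rule Bochner_Integration.integral_sum) (auto intro!: measure_pmf.integrable_const_bound[where B=1])
    then show ?thesis by simp
  qed
  also have "\<dots> \<le> (\<integral>x. N \<partial>M)"
  proof (rule integral_mono)
    show "integrable (measure_pmf M) (\<lambda>x. \<Sum>i\<in>P. indicator (E i) x :: real)"
      by (rule Bochner_Integration.integrable_sum) (auto intro!: measure_pmf.integrable_const_bound[where B=1])
    fix x
    have "(\<Sum>i\<in>P. indicator (E i) x :: real) = real (card {i\<in>P. x \<in> E i})"
      using assms(1) by (simp add: indicator_def sum.If_cases Int_def)
    then show "(\<Sum>i\<in>P. indicator (E i) x :: real) \<le> N" using assms(2) by simp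
  qed simp
  also have "\<dots> = N" by simp
  finally show ?thesis .
qed

lemma measure_bind_pmf_real:
  "measure_pmf.prob (bind_pmf M f) X = (\<integral>x. measure_pmf.prob (f x) X \<partial>M)"
proof -
  have "ennreal (measure_pmf.prob (bind_pmf M f) X) = emeasure (bind_pmf M f) X"
    by (simp add: measure_pmf.emeasure_eq_measure)
  also have "\<dots> = (\<integral>\<^sup>+x. emeasure (f x) X \<partial>M)" by simp
  also have "\<dots> = (\<integral>\<^sup>+x. ennreal (measure_pmf.prob (f x) X) \<partial>M)"
    by (simp add: measure_pmf.emeasure_eq_measure)
  also have "\<dots> = ennreal (\<integral>x. measure_pmf.prob (f x) X \<partial>M)"
    by (intro nn_integral_eq_integral measure_pmf.integrable_const_bound[where B=1]) auto
  finally show ?thesis by (simp add: integral_nonneg)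
qed

lemma measure_bind_ret:
  "measure_pmf.prob (bind_pmf M (\<lambda>y. return_pmf (x, y))) G = measure_pmf.prob M {y. (x, y) \<in> G}"
proof -
  have "bind_pmf M (\<lambda>y. return_pmf (x, y)) = map_pmf (Pair x) M" by (simp add: map_pmf_def)
  then show ?thesis by (simp add: vimage_def)
qed

lemma tail_arith:
  assumes "dn \<ge> 1" "12 * dn \<le> c"
  shows "(2::real) ^ dn * (3 / 4) ^ c \<le> 1 / 10"
proof -
  have "(3 / 4 :: real) ^ c \<le> (3 / 4) ^ (12 * dn)" using assms by (intro power_decreasing) auto
  then have "(2::real) ^ dn * (3 / 4) ^ c \<le> 2 ^ dn * (3 / 4) ^ (12 * dn)" by simp
  also have "\<dots> = (2 * (3 / 4) ^ 12) ^ dn" by (simp add: power_mult power_mult_distrib)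
  also have "\<dots> \<le> (2 * (3 / 4) ^ 12) ^ 1" using assms by (intro power_decreasing) (auto simp: power_numeral_reduce)
  also have "\<dots> \<le> 1 / 10" by (simp add: power_numeral_reduce)
  finally show ?thesis .
qed


lemma sig_restrict:
  assumes "w \<in> set W"
  shows "sig k l m S w = sig k l m (S \<inter> {b. b < m \<and> (\<exists>w\<in>set W. fst (w b))}) w"
  using assms by (auto simp: sig_def Fb_def fun_eq_iff)

lemma phi_bound:
  assumes k: "k \<ge> 2" "l \<ge> 1" and eps: "0 < eps0" "eps0 < 1 / 2" and m: "m \<ge> 25"
    and p: "pp k l \<ge> 100 * eps0 / m"
    and hw: "2 * card {b. b < m \<and> (\<exists>w\<in>set W. fst (w b))} \<le> m"
  shows "measure_pmf.prob (bind_pmf (pmf_of_set {0..<2 ^ m})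
      (\<lambda>K. bind_pmf (A (map (sig k l m (bset m K)) W)) (\<lambda>K'. return_pmf (K, K'))))
      {(K, K'). K' < 2 ^ m \<and> dTV (mu k l m K) (mu k l m K') \<le> eps0} \<le> 1 / 10"
proof -
  define H where "H = {b. b < m \<and> (\<exists>w\<in>set W. fst (w b))}"
  define C where "C = {0..<m} - H"
  define dn where "dn = m div 25"
  define G where "G = {(K, K'). K' < 2 ^ m \<and> dTV (mu k l m K) (mu k l m K') \<le> eps0}"
  define X where "X = (\<lambda>S. map (sig k l m S) W)"
  define E where "E = (\<lambda>S. {K'. card ((S - bset m K') \<union> (bset m K' - S)) \<le> dn})"
  define h where "h = (\<lambda>S. measure_pmf.prob (A (X (S \<inter> H))) (E S))"
  have HV: "H \<subseteq> {0..<m}" by (auto simp: H_def)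
  have finH: "finite H" "finite C" using HV by (auto simp: C_def intro: finite_subset)
  have cardm: "card H + card C = m"
    using card_Un_disjoint[OF finH, symmetric] HV by (simp add: C_def Un_absorb1 Int_Diff)
  have "measure_pmf.prob (bind_pmf (pmf_of_set {0..<2 ^ m})
      (\<lambda>K. bind_pmf (A (X (bset m K))) (\<lambda>K'. return_pmf (K, K')))) G =
      (\<Sum>K\<in>{0..<2 ^ m}. measure_pmf.prob (A (X (bset m K))) {K'. (K, K') \<in> G}) / 2 ^ m"
    unfolding measure_bind_pmf_real[of "pmf_of_set {0..<2 ^ m}"] measure_bind_ret
    by (subst integral_pmf_of_set) auto
  also have "(\<Sum>K\<in>{0..<2 ^ m}. measure_pmf.prob (A (X (bset m K))) {K'. (K, K') \<in> G}) \<le>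
      (\<Sum>K\<in>{0..<2 ^ m}. h (bset m K))"
  proof (rule sum_mono)
    fix K assume "K \<in> {0..<(2::nat) ^ m}"
    have "X (bset m K) = X (bset m K \<inter> H)"
      unfolding X_def H_def by (intro map_cong refl sig_restrict)
    moreover have "{K'. (K, K') \<in> G} \<subseteq> E (bset m K)"
    proof
      fix K' assume "K' \<in> {K'. (K, K') \<in> G}"
      then have "dTV (mu k l m K) (mu k l m K') \<le> eps0" by (auto simp: G_def)
      then have "real (card ((bset m K - bset m K') \<union> (bset m K' - bset m K))) < m / 25"
        using good_ham[OF k eps _ p] m by auto
      then have "card ((bset m K - bset m K') \<union> (bset m K' - bset m K)) \<le> dn"
        unfolding dn_def by linarith
      then show "K' \<in> E (bset m K)" by (simp add: E_def)
    qed
    ultimately show "measure_pmf.prob (A (X (bset m K))) {K'. (K, K') \<in> G} \<le> h (bset m K)"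
      unfolding h_def by (simp add: measure_pmf.finite_measure_mono)
  qed
  also have "(\<Sum>K\<in>{0..<2 ^ m}. h (bset m K)) = (\<Sum>S\<in>Pow {0..<m}. h S)"
    by (rule sum.reindex_bij_betw[OF bset_bij])
  also have "\<dots> = (\<Sum>z\<in>Pow H \<times> Pow C. h (fst z \<union> snd z))"
  proof (rule sum.reindex_bij_betw[symmetric])
    show "bij_betw (\<lambda>z. fst z \<union> snd z) (Pow H \<times> Pow C) (Pow {0..<m})"
      by (rule bij_betw_byWitness[where f'="\<lambda>S. (S \<inter> H, S \<inter> C)"]) (use HV in \<open>auto simp: C_def\<close>)
  qed
  also have "\<dots> = (\<Sum>S1\<in>Pow H. \<Sum>S2\<in>Pow C. h (S1 \<union> S2))"
    by (rule sum.cartesian_product[symmetric, unfolded case_prod_beta'])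
  also have "\<dots> \<le> (\<Sum>S1\<in>Pow H. 2 ^ dn * (3 / 2) ^ card C)"
  proof (rule sum_mono)
    fix S1 assume S1: "S1 \<in> Pow H"
    have "(\<Sum>S2\<in>Pow C. h (S1 \<union> S2)) = (\<Sum>S2\<in>Pow C. measure_pmf.prob (A (X S1)) (E (S1 \<union> S2)))"
    proof (intro sum.cong refl)
      fix S2 assume "S2 \<in> Pow C"
      then have "(S1 \<union> S2) \<inter> H = S1" using S1 by (auto simp: C_def)
      then show "h (S1 \<union> S2) = measure_pmf.prob (A (X S1)) (E (S1 \<union> S2))" by (simp add: h_def)
    qed
    also have "\<dots> \<le> 2 ^ dn * (3 / 2) ^ card C"
    proof (rule measure_sum_le)
      fix K'
      have "card {S2\<in>Pow C. K' \<in> E (S1 \<union> S2)} \<le> card {Z\<in>Pow C. card Z \<le> dn}"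
        unfolding E_def using count_ham[OF finH(2), of S1 "bset m K'" dn] S1 finH
        by (auto simp: C_def bset_def intro: finite_subset)
      then have "real (card {S2\<in>Pow C. K' \<in> E (S1 \<union> S2)}) \<le> real (card {Z\<in>Pow C. card Z \<le> dn})"
        by linarith
      also have "\<dots> \<le> 2 ^ dn * (3 / 2) ^ card C" by (rule count_small[OF finH(2)])
      finally show "real (card {S2\<in>Pow C. K' \<in> E (S1 \<union> S2)}) \<le> 2 ^ dn * (3 / 2) ^ card C" .
    qed (use finH in simp)
    finally show "(\<Sum>S2\<in>Pow C. h (S1 \<union> S2)) \<le> 2 ^ dn * (3 / 2) ^ card C" .
  qed
  also have "\<dots> = 2 ^ card H * (2 ^ dn * (3 / 2) ^ card C)" using finH by (simp add: card_Pow)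
  finally have "measure_pmf.prob (bind_pmf (pmf_of_set {0..<2 ^ m})
      (\<lambda>K. bind_pmf (A (X (bset m K))) (\<lambda>K'. return_pmf (K, K')))) G \<le>
      2 ^ card H * (2 ^ dn * (3 / 2) ^ card C) / 2 ^ m" by (simp add: divide_right_mono)
  also have "2 ^ card H * (2 ^ dn * (3 / 2) ^ card C) / 2 ^ m = (2::real) ^ dn * (3 / 4) ^ card C"
  proof -
    have "(2::real) ^ m = 2 ^ card H * 2 ^ card C" using cardm by (metis power_add)
    moreover have "(3 / 2 :: real) ^ card C / 2 ^ card C = (3 / 4) ^ card C"
      by (simp add: power_divide flip: power_mult_distrib)
    ultimately show ?thesis by (simp add: field_simps)
  qed
  also have "\<dots> \<le> 1 / 10"
  proof (rule tail_arith)
    show "dn \<ge> 1" using m by (simp add: dn_def)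
    have "2 * card H \<le> m" using hw by (simp add: H_def)
    then show "12 * dn \<le> card C" using cardm by (simp add: dn_def)
  qed
  finally show ?thesis by (simp add: X_def G_def)
qed


lemma prob_bad:
  assumes k: "k \<ge> 2" "l \<ge> 1" and m: "m > 0"
  shows "measure_pmf.prob (replicate_pmf T (QQ k l m))
     {W. m < 2 * card {b. b < m \<and> (\<exists>w\<in>set W. fst (w b))}} \<le> 2 * real T * pp k l"
proof -
  let ?R = "replicate_pmf T (QQ k l m)"
  define Ev :: "nat \<Rightarrow> (nat \<Rightarrow> bool \<times> (nat \<times> nat \<Rightarrow> bool)) list set"
    where "Ev = (\<lambda>b. {W. \<exists>w\<in>set W. fst (w b)})"
  have cardeq: "real (card {b. b < m \<and> (\<exists>w\<in>set W. fst (w b))}) = (\<Sum>b\<in>{0..<m}. indicator (Ev b) W)" for W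
  proof -
    have "{b. b < m \<and> (\<exists>w\<in>set W. fst (w b))} = {0..<m} \<inter> {b. W \<in> Ev b}" by (auto simp: Ev_def)
    then show ?thesis by (simp add: indicator_def sum.If_cases)
  qed
  have int1: "integrable (measure_pmf ?R) (\<lambda>W. 2 / real m * (\<Sum>b\<in>{0..<m}. indicator (Ev b) W :: real))"
    by (intro integrable_mult_right Bochner_Integration.integrable_sum)
       (auto intro!: measure_pmf.integrable_const_bound[where B=1])
  have "measure_pmf.prob ?R {W. m < 2 * card {b. b < m \<and> (\<exists>w\<in>set W. fst (w b))}} =
      (\<integral>W. indicator {W. m < 2 * card {b. b < m \<and> (\<exists>w\<in>set W. fst (w b))}} W \<partial>?R)" by simp
  also have "\<dots> \<le> (\<integral>W. 2 / real m * (\<Sum>b\<in>{0..<m}. indicator (Ev b) W) \<partial>?R)"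
  proof (rule integral_mono[OF _ int1])
    show "integrable (measure_pmf ?R) (indicat_real {W. m < 2 * card {b. b < m \<and> (\<exists>w\<in>set W. fst (w b))}})"
      by (auto intro!: measure_pmf.integrable_const_bound[where B=1])
    fix W
    show "indicat_real {W. m < 2 * card {b. b < m \<and> (\<exists>w\<in>set W. fst (w b))}} W \<le>
        2 / real m * (\<Sum>b\<in>{0..<m}. indicator (Ev b) W)"
    proof (cases "m < 2 * card {b. b < m \<and> (\<exists>w\<in>set W. fst (w b))}")
      case True
      then have "real m < 2 * real (card {b. b < m \<and> (\<exists>w\<in>set W. fst (w b))})" by linarith
      then have "1 \<le> 2 / real m * real (card {b. b < m \<and> (\<exists>w\<in>set W. fst (w b))})"
        using m by (simp add: field_simps)
      then show ?thesis using True cardeq[of W] by simp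
    next
      case False
      then show ?thesis using m by (simp add: sum_nonneg)
    qed
  qed
  also have "\<dots> = 2 / real m * (\<Sum>b\<in>{0..<m}. measure_pmf.prob ?R (Ev b))"
  proof -
    have "(\<integral>W. (\<Sum>b\<in>{0..<m}. indicator (Ev b) W :: real) \<partial>?R) = (\<Sum>b\<in>{0..<m}. \<integral>W. indicator (Ev b) W \<partial>?R)"
      by (rule Bochner_Integration.integral_sum) (auto intro!: measure_pmf.integrable_const_bound[where B=1])
    then show ?thesis by simp
  qed
  also have "\<dots> \<le> 2 / real m * (\<Sum>b\<in>{0..<m}. T * pp k l)"
  proof (intro mult_left_mono sum_mono)
    fix b assume "b \<in> {0..<m}"
    then have "measure_pmf.prob (QQ k l m) {w. fst (w b)} = pp k l" using prob_fst_QQ[OF k] by simp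
    then show "measure_pmf.prob ?R (Ev b) \<le> T * pp k l"
      using prob_rep_exists[of T "QQ k l m" "\<lambda>w. fst (w b)"] by (simp add: Ev_def)
  qed simp
  also have "\<dots> = 2 * real T * pp k l" using m by simp
  finally show ?thesis .
qed

lemma success_le:
  assumes k: "k \<ge> 2" "l \<ge> 1" and eps: "0 < eps0" "eps0 < 1 / 2" and m: "m \<ge> 25"
    and p: "pp k l \<ge> 100 * eps0 / m"
  shows "success_prob k l m eps0 T A \<le> 1 / 10 + 2 * real T * pp k l"
proof -
  let ?U = "pmf_of_set {0..<(2::nat) ^ m}"
  let ?R = "replicate_pmf T (QQ k l m)"
  define G where "G = {(K, K'). K' < 2 ^ m \<and> dTV (mu k l m K) (mu k l m K') \<le> eps0}"
  define phi where "phi = (\<lambda>W. measure_pmf.prob (bind_pmf ?U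
      (\<lambda>K. bind_pmf (A (map (sig k l m (bset m K)) W)) (\<lambda>K'. return_pmf (K, K')))) G)"
  define Bad :: "(nat \<Rightarrow> bool \<times> (nat \<times> nat \<Rightarrow> bool)) list set" where "Bad = {W. m < 2 * card {b. b < m \<and> (\<exists>w\<in>set W. fst (w b))}}"
  have "success_prob k l m eps0 T A = measure_pmf.prob (bind_pmf ?R (\<lambda>W. bind_pmf ?U
      (\<lambda>K. bind_pmf (A (map (sig k l m (bset m K)) W)) (\<lambda>K'. return_pmf (K, K'))))) G"
    unfolding success_prob_def G_def mu_rep[OF k] replicate_pmf_map bind_map_pmf
    by (subst bind_commute_pmf) (rule refl)
  also have "\<dots> = (\<integral>W. phi W \<partial>?R)" by (simp add: measure_bind_pmf_real phi_def)
  also have "\<dots> \<le> (\<integral>W. 1 / 10 + indicator Bad W \<partial>?R)"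
  proof (rule integral_mono)
    show "integrable (measure_pmf ?R) phi"
      by (auto intro!: measure_pmf.integrable_const_bound[where B=1] simp: phi_def)
    show "integrable (measure_pmf ?R) (\<lambda>W. 1 / 10 + indicat_real Bad W)"
      by (rule Bochner_Integration.integrable_add) (auto intro!: measure_pmf.integrable_const_bound[where B=1])
    fix W
    show "phi W \<le> 1 / 10 + indicat_real Bad W"
    proof (cases "W \<in> Bad")
      case True
      have "phi W \<le> 1" unfolding phi_def by (rule measure_pmf.prob_le_1)
      then show ?thesis using True by simp
    next
      case False
      then have "2 * card {b. b < m \<and> (\<exists>w\<in>set W. fst (w b))} \<le> m" by (simp add: Bad_def)
      then show ?thesis using phi_bound[OF k eps m p] False by (simp add: phi_def G_def)
    qed
  qed
  also have "\<dots> = 1 / 10 + measure_pmf.prob ?R Bad"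
    by (subst Bochner_Integration.integral_add) (auto intro!: measure_pmf.integrable_const_bound[where B=1])
  also have "\<dots> \<le> 1 / 10 + 2 * real T * pp k l"
    using prob_bad[OF k, of m T] m by (simp add: Bad_def)
  finally show ?thesis .
qed


lemma l_facts:
  fixes eps0 :: real
  assumes k: "k \<ge> 2" and e: "0 < eps0" "eps0 < 1" and m: "real m \<ge> 100 * 2 ^ k"
    and l: "l = nat \<lfloor>(1 / real k) * log 2 (real m / (100 * eps0))\<rfloor>"
  shows "l \<ge> 1" "2 ^ (k * l) \<le> real m / (100 * eps0)" "real m / (100 * eps0) < 2 ^ (k * (l + 1))"
proof -
  define Q where "Q = real m / (100 * eps0)"
  define L where "L = log 2 Q"
  have mpos: "real m > 0" using m by (smt (verit) zero_less_power)
  have "real m / 100 < Q" unfolding Q_def using e mpos by (simp add: field_simps)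
  then have Qk: "Q > 2 ^ k" using m by simp
  have Qpos: "Q > 0" using Qk by (smt (verit) zero_less_power)
  have QL: "Q = 2 powr L" unfolding L_def using Qpos by simp
  have "L > k"
  proof -
    have "2 powr real k < 2 powr L" using Qk QL by (simp add: powr_realpow)
    then show ?thesis by simp
  qed
  have kpos: "real k > 0" using k by simp
  have f1: "(1 / real k) * L > 1" using \<open>L > k\<close> kpos by (simp add: field_simps)
  have fl: "real l = of_int \<lfloor>(1 / real k) * L\<rfloor>" using l f1 by (simp add: L_def Q_def)
  have fl1: "real l \<le> (1 / real k) * L" "(1 / real k) * L < real l + 1"
    using fl by linarith+
  show "l \<ge> 1" using fl f1 by linarith
  have "real (k * l) \<le> L" using fl1(1) kpos by (simp add: field_simps)
  then have a: "2 powr real (k * l) \<le> 2 powr L" by simp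
  have pw: "(2::real) powr real (k * l) = 2 ^ (k * l)" by (rule powr_realpow) simp
  show "2 ^ (k * l) \<le> real m / (100 * eps0)" using a pw QL Q_def by linarith
  have "L < real (k * (l + 1))" using fl1(2) kpos by (simp add: field_simps)
  then have b: "2 powr L < 2 powr real (k * (l + 1))" by simp
  have pw2: "(2::real) powr real (k * (l + 1)) = 2 ^ (k * (l + 1))" by (rule powr_realpow) simp
  show "real m / (100 * eps0) < 2 ^ (k * (l + 1))" using b pw2 QL Q_def by linarith
qed

lemma bound_le:
  fixes eps0 :: real
  assumes k: "k \<ge> 2" and e: "0 < eps0" and l: "l \<ge> 1" and m: "m > 0"
    and h1: "2 ^ (k * l) \<le> real m / (100 * eps0)" and h2: "real m / (100 * eps0) < 2 ^ (k * (l + 1))"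
  shows "1 / (25 * 2 ^ k) * (real (m * k * l) / (100 * eps0 * log 2 (real (m * k * l) / (100 * eps0))))
           powr ((real k - 2) / real k) \<le> 2 ^ (l * (k - 2)) / 100"
proof -
  define Q where "Q = real m / (100 * eps0)"
  define x where "x = real (m * k * l) / (100 * eps0 * log 2 (real (m * k * l) / (100 * eps0)))"
  have "k * l \<ge> 1" using k l by (simp add: Suc_le_eq)
  then have kl: "real (k * l) \<ge> 1" by (metis of_nat_1 of_nat_le_iff)
  have Qpos: "Q > 0" using m e by (simp add: Q_def)
  have nQ: "real (m * k * l) / (100 * eps0) = real (k * l) * Q" by (simp add: Q_def field_simps)
  have "1 * Q \<le> real (k * l) * Q" by (rule mult_right_mono[OF kl]) (use Qpos in simp)
  then have "2 ^ (k * l) \<le> real (k * l) * Q" using h1 unfolding Q_def by simp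
  moreover have "(2::real) powr real (k * l) = 2 ^ (k * l)" by (rule powr_realpow) simp
  ultimately have "2 powr real (k * l) \<le> real (k * l) * Q" by simp
  then have "log 2 (real (k * l) * Q) \<ge> real (k * l)"
    using Qpos kl by (subst le_log_iff) auto
  then have lg: "log 2 (real (m * k * l) / (100 * eps0)) \<ge> real (k * l)"
    using nQ by simp
  have lgpos: "log 2 (real (m * k * l) / (100 * eps0)) > 0" using lg kl by linarith
  define LG where "LG = log 2 (real (m * k * l) / (100 * eps0))"
  have "x = (real (m * k * l) / (100 * eps0)) / LG"
    unfolding x_def LG_def by (rule divide_divide_eq_left[symmetric])
  then have x_eq: "x = real (k * l) * Q / log 2 (real (m * k * l) / (100 * eps0))"
    unfolding nQ LG_def .
  have x0: "x \<ge> 0" unfolding x_eq using Qpos lgpos by simp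
  have "x \<le> real (k * l) * Q / real (k * l)" unfolding x_eq
    using Qpos kl lg by (intro divide_left_mono) auto
  also have "\<dots> = Q" using k l by simp
  finally have xQ: "x \<le> 2 ^ (k * (l + 1))" using h2 unfolding Q_def by simp
  have ex: "(real k - 2) / real k \<ge> 0" using k by simp
  have "x powr ((real k - 2) / real k) \<le> (2 ^ (k * (l + 1))) powr ((real k - 2) / real k)"
    by (rule powr_mono2[OF ex x0 xQ])
  also have "(2 ^ (k * (l + 1)) :: real) powr ((real k - 2) / real k) = 2 powr (real (k * (l + 1)) * ((real k - 2) / real k))"
    by (simp add: powr_powr flip: powr_realpow)
  also have "real (k * (l + 1)) * ((real k - 2) / real k) = real ((l + 1) * (k - 2))"
    using k by (simp add: field_simps of_nat_diff)
  also have "2 powr real ((l + 1) * (k - 2)) = (2::real) ^ ((l + 1) * (k - 2))" by (rule powr_realpow) simp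
  finally have xp: "x powr ((real k - 2) / real k) \<le> 2 ^ ((l + 1) * (k - 2))" .
  have "1 / (25 * 2 ^ k) * x powr ((real k - 2) / real k) \<le> 1 / (25 * 2 ^ k) * 2 ^ ((l + 1) * (k - 2))"
    using xp by (intro mult_left_mono) auto
  also have "\<dots> = 2 ^ (l * (k - 2)) / 100"
  proof -
    have "(l + 1) * (k - 2) = l * (k - 2) + (k - 2)" by (simp only: add_mult_distrib mult_1)
    then have "(2::real) ^ ((l + 1) * (k - 2)) = 2 ^ (l * (k - 2)) * 2 ^ (k - 2)" by (simp only: power_add)
    moreover have "(2::real) ^ k = 4 * 2 ^ (k - 2)"
      using k by (metis (no_types) le_add_diff_inverse power_add power2_eq_square numeral_Bit0 mult_2 numeral_One mult_1 add.commute)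
    ultimately show ?thesis by (simp add: field_simps)
  qed
  finally show ?thesis unfolding x_def .
qed


theorem lemma5p8:
  fixes k :: nat and eps0 :: real
  assumes "k \<ge> 2" and "0 < eps0" and "eps0 < 1 / (200 * 2 ^ k)"
  shows "\<exists>m0::nat. \<forall>m \<ge> m0.
           let l = nat \<lfloor>(1 / real k) * log 2 (real m / (100 * eps0))\<rfloor>;
               n = m * k * l
           in \<forall>(T::nat) (A :: assignment list \<Rightarrow> nat pmf).
                success_prob k l m eps0 T A \<ge> 1 / 3 \<longrightarrow>
                real T \<ge> 1 / (25 * 2 ^ k) *
                  (real n / (100 * eps0 * log 2 (real n / (100 * eps0))))
                    powr ((real k - 2) / real k)"
proof -
  have k: "k \<ge> 2" by fact
  have "(1::real) / (200 * 2 ^ k) \<le> 1 / 200" by (simp add: field_simps)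
  then have e2: "eps0 < 1 / 2" "eps0 < 1" using assms(3) by linarith+
  show ?thesis
  proof (intro exI[of _ "100 * 2 ^ k"] allI impI)
    fix m :: nat assume mge: "m \<ge> 100 * 2 ^ k"
    define l where "l = nat \<lfloor>(1 / real k) * log 2 (real m / (100 * eps0))\<rfloor>"
    have rm: "real m \<ge> 100 * 2 ^ k"
    proof -
      have "real (100 * 2 ^ k) \<le> real m" using mge by (rule of_nat_mono)
      then show ?thesis by simp
    qed
    have "(4::nat) \<le> 2 ^ k" using k
      by (metis power2_eq_square numeral_Bit0 mult_2 power_increasing one_le_numeral numeral_One one_add_one)
    then have m25: "m \<ge> 25" using mge by linarith
    then have m0: "m > 0" by simp
    note lf = l_facts[OF k assms(2) e2(2) rm l_def]
    note sb = Sb_basic[OF k lf(1)]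
    have ppl: "pp k l \<ge> 100 * eps0 / m"
    proof -
      have c: "real (card (Sb k l False)) \<le> 2 ^ (k * l)"
      proof -
        have "card (Sb k l False) \<le> 2 ^ (l * k)" using Sb_card_le by blast
        then have "real (card (Sb k l False)) \<le> real (2 ^ (l * k))" by (rule of_nat_mono)
        then show ?thesis by (simp add: mult.commute)
      qed
      have cpos: "real (card (Sb k l False)) > 0" using sb by simp
      have "100 * eps0 / m = 1 / (real m / (100 * eps0))" by simp
      also have "\<dots> \<le> 1 / real (card (Sb k l False))"
      proof (rule divide_left_mono)
        show "real (card (Sb k l False)) \<le> real m / (100 * eps0)" using c lf(2) by linarith
        show "0 < real m / (100 * eps0) * real (card (Sb k l False))"
          using cpos m0 assms(2) by simp
      qed simp
      finally show ?thesis by (simp add: pp_def)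
    qed
    have ppu: "pp k l * 2 ^ (l * (k - 2)) \<le> 1"
    proof -
      have "card (Sb k l True) \<ge> 2 ^ (l * (k - 2))" by (rule Sb_True_card_ge[OF k])
      then have "real (card (Sb k l False)) \<ge> 2 ^ (l * (k - 2))" using sb(5)
        by (metis Suc_leD of_nat_le_iff of_nat_numeral of_nat_power le_SucI)
      moreover have "real (card (Sb k l False)) > 0" using sb by simp
      ultimately show ?thesis by (simp add: pp_def field_simps)
    qed
    show "let l = nat \<lfloor>(1 / real k) * log 2 (real m / (100 * eps0))\<rfloor>;
               n = m * k * l
           in \<forall>(T::nat) (A :: assignment list \<Rightarrow> nat pmf).
                success_prob k l m eps0 T A \<ge> 1 / 3 \<longrightarrow>
                real T \<ge> 1 / (25 * 2 ^ k) *
                  (real n / (100 * eps0 * log 2 (real n / (100 * eps0))))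
                    powr ((real k - 2) / real k)"
      unfolding Let_def l_def[symmetric]
    proof (intro allI impI)
      fix T :: nat and A :: "assignment list \<Rightarrow> nat pmf"
      assume succ: "success_prob k l m eps0 T A \<ge> 1 / 3"
      show "real T \<ge> 1 / (25 * 2 ^ k) *
                  (real (m * k * l) / (100 * eps0 * log 2 (real (m * k * l) / (100 * eps0))))
                    powr ((real k - 2) / real k)"
      proof (rule ccontr)
        assume "\<not> ?thesis"
        then have "real T < 2 ^ (l * (k - 2)) / 100"
          using bound_le[OF k assms(2) lf(1) m0 lf(2) lf(3)] by linarith
        then have "2 * real T * pp k l \<le> 2 * (2 ^ (l * (k - 2)) / 100) * pp k l"
          using sb by (intro mult_right_mono) auto
        also have "\<dots> = (pp k l * 2 ^ (l * (k - 2))) / 50" by simp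
        also have "\<dots> \<le> 1 / 50" using ppu by simp
        finally have "success_prob k l m eps0 T A \<le> 1 / 10 + 1 / 50"
          using success_le[OF k lf(1) assms(2) e2(1) m25 ppl, of T A] by linarith
        then show False using succ by simp
      qed
    qed
  qed
qed

end
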